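(* Let $n\ge 2$, $0<k\le\lfloor n/2\rfloor$, $m_1,\dots,m_n\in\mathbb{R}$, and let $\mathcal{M}(t)$ be the $n\times n$ matrix whose first $k$ rows are $\big(e^{-m_1t}m_1^{r},\dots,e^{-m_nt}m_n^{r}\big)$ for $r=0,1,\dots,k-1$ and whose last $n-k$ rows are $\big(m_1^{s},\dots,m_n^{s}\big)$ for $s=0,1,\dots,n-k-1$. Then the power series of $\det\mathcal{M}(t)$ about $t=0$ has no terms of degree less than $k(n-k)$ and begins $$\det\mathcal{M}(t)=\frac{\varepsilon_{k,n}V}{(k(n-k))!}\,c_0\,t^{k(n-k)}+\dots,$$ where $V=\prod_{1\le i<j\le n}(m_i-m_j)$, $\varepsilon_{k,n}=(-1)^{k(n-k)+\sigma(k)+\sigma(n-k)}$, and $$c_0=(k(n-k))!\prod_{i=1}^{k}\frac{(i-1)!}{(n-k+i-1)!}.$$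
   Context: $\sigma:\mathbb{Z}\to\{0,1\}$ is defined by $\sigma(N)=0$ if $N\equiv 0,1\pmod 4$ and $\sigma(N)=1$ if $N\equiv 2,3\pmod 4$. *)

theory Defs
  imports "HOL-Analysis.Analysis" "Jordan_Normal_Form.Determinant"
begin

definition sigma :: "int \<Rightarrow> nat" where
  "sigma N = (if N mod 4 \<in> {0, 1} then 0 else 1)"

text \<open>The n x n matrix M(t); rows/columns 0-indexed, m indexed 1..n.
 Row r < k: entries exp(-m_j t) m_j^r; row k+s: entries m_j^s.\<close>
definition Mmat :: "nat \<Rightarrow> nat \<Rightarrow> (nat \<Rightarrow> real) \<Rightarrow> real \<Rightarrow> real mat" where
  "Mmat n k m t = Matrix.mat n n (\<lambda>(i, j).
      if i < k then exp (- m (Suc j) * t) * m (Suc j) ^ i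
      else m (Suc j) ^ (i - k))"

definition Vand :: "nat \<Rightarrow> (nat \<Rightarrow> real) \<Rightarrow> real" where
  "Vand n m = (\<Prod>i\<in>{1..n}. \<Prod>j\<in>{i<..n}. (m i - m j))"

definition eps_kn :: "nat \<Rightarrow> nat \<Rightarrow> real" where
  "eps_kn k n = (-1) ^ (k * (n - k) + sigma (int k) + sigma (int (n - k)))"

definition c0 :: "nat \<Rightarrow> nat \<Rightarrow> real" where
  "c0 k n = fact (k * (n - k)) * (\<Prod>i\<in>{1..k}. fact (i - 1) / fact (n - k + i - 1))"

end

theory Submission
  imports Defs
begin

lemma prod_pairs_Suc:
  "(\<Prod>i<Suc n. \<Prod>j\<in>{i<..<Suc n}. g i j) = (\<Prod>i<n. \<Prod>j\<in>{i<..<n}. g i j) * (\<Prod>i<n. g i n)"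
proof -
  have e: "{n<..<Suc n} = {}" by auto
  have "(\<Prod>i<Suc n. \<Prod>j\<in>{i<..<Suc n}. g i j) = (\<Prod>i<n. \<Prod>j\<in>{i<..<Suc n}. g i j)"
    by (simp add: e)
  also have "\<dots> = (\<Prod>i<n. (\<Prod>j\<in>{i<..<n}. g i j) * g i n)"
  proof (intro prod.cong refl)
    fix i assume "i \<in> {..<n}"
    then have "{i<..<Suc n} = insert n {i<..<n}" by auto
    then show "(\<Prod>j\<in>{i<..<Suc n}. g i j) = (\<Prod>j\<in>{i<..<n}. g i j) * g i n"
      by (simp add: mult.commute)
  qed
  also have "\<dots> = (\<Prod>i<n. \<Prod>j\<in>{i<..<n}. g i j) * (\<Prod>i<n. g i n)"
    by (simp add: prod.distrib)
  finally show ?thesis .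
qed

lemma det_scale_cols:
  fixes f :: "nat \<Rightarrow> nat \<Rightarrow> 'a::comm_ring_1"
  shows "Determinant.det (Matrix.mat n n (\<lambda>(i,j). f i j * d j))
       = (\<Prod>j<n. d j) * Determinant.det (Matrix.mat n n (\<lambda>(i,j). f i j))"
proof -
  have "Determinant.det (Matrix.mat n n (\<lambda>(i,j). f i j * d j))
     = (\<Sum>p\<in>{p. p permutes {0..<n}}. signof p * ((\<Prod>i=0..<n. f i (p i)) * (\<Prod>i=0..<n. d (p i))))"
    unfolding det_def
    by (auto intro!: sum.cong prod.cong simp: prod.distrib permutes_def)
  also have "\<dots> = (\<Sum>p\<in>{p. p permutes {0..<n}}. (\<Prod>j<n. d j) * (signof p * (\<Prod>i=0..<n. f i (p i))))"
  proof (intro sum.cong refl)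
    fix p assume "p \<in> {p. p permutes {0..<n}}"
    then have "(\<Prod>i=0..<n. d (p i)) = (\<Prod>j<n. d j)"
      using prod.permute[of p "{0..<n}" d] by (simp add: o_def atLeast0LessThan)
    then show "signof p * ((\<Prod>i=0..<n. f i (p i)) * (\<Prod>i=0..<n. d (p i))) =
      (\<Prod>j<n. d j) * (signof p * (\<Prod>i=0..<n. f i (p i)))" by simp
  qed
  also have "\<dots> = (\<Prod>j<n. d j) * Determinant.det (Matrix.mat n n (\<lambda>(i,j). f i j))"
    unfolding det_def by (simp add: sum_distrib_left)
  finally show ?thesis .
qed

lemma vandermonde:
  fixes y :: "nat \<Rightarrow> 'a::comm_ring_1"
  shows "Determinant.det (Matrix.mat n n (\<lambda>(i,j). y j ^ i)) = (\<Prod>i<n. \<Prod>j\<in>{i<..<n}. (y j - y i))"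
proof (induction n)
  case 0
  show ?case by (simp add: det_def sign_def)
next
  case (Suc n)
  define A where "A = Matrix.mat (Suc n) (Suc n) (\<lambda>(i,j). y j ^ i)"
  define L where "L = Matrix.mat (Suc n) (Suc n) (\<lambda>(i,l). if l = i then 1 else if Suc l = i then - y n else (0::'a))"
  define B where "B = Matrix.mat (Suc n) (Suc n) (\<lambda>(i,j). if i = 0 then 1 else y j ^ (i - 1) * (y j - y n))"
  have LA: "L * A = B"
  proof (rule eq_matI)
    fix i j assume i: "i < dim_row B" and j: "j < dim_col B"
    then have ij: "i < Suc n" "j < Suc n" by (auto simp: B_def)
    have "(L * A) $$ (i,j) = (\<Sum>l\<in>{0..<Suc n}. (if l = i then 1 else if Suc l = i then - y n else 0) * y j ^ l)"
      using ij by (simp add: L_def A_def scalar_prod_def)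
    also have "\<dots> = (\<Sum>l\<in>{0..<Suc n}. (if l = i then y j ^ l else 0) + (if Suc l = i then - y n * y j ^ l else 0))"
      by (intro sum.cong refl) auto
    also have "\<dots> = B $$ (i,j)"
    proof (cases i)
      case 0
      then show ?thesis using ij by (simp add: sum.distrib B_def)
    next
      case (Suc i')
      have "(\<Sum>l\<in>{0..<Suc n}. (if Suc l = i then - y n * y j ^ l else 0))
          = (\<Sum>l\<in>{0..<Suc n}. (if l = i' then - y n * y j ^ l else 0))"
        using Suc by (intro sum.cong refl) auto
      moreover have "Suc i' < n \<or> Suc i' = n" using ij Suc by auto
      ultimately show ?thesis using ij Suc by (auto simp: sum.distrib B_def algebra_simps)
    qed
    finally show "(L * A) $$ (i,j) = B $$ (i,j)" .
  qed (auto simp: L_def A_def B_def)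
  have detL: "Determinant.det L = 1"
  proof -
    have "Determinant.det L = prod_list (diag_mat L)"
      by (rule det_lower_triangular[of "Suc n"]) (auto simp: L_def)
    also have "diag_mat L = map (\<lambda>_. 1) [0..<Suc n]"
      by (simp add: diag_mat_def L_def)
    moreover have "prod_list (map (\<lambda>_. (1::'a)) xs) = 1" for xs :: "nat list" by (induct xs) auto
    ultimately show ?thesis by simp
  qed
  have "Determinant.det B = Determinant.det (L * A)" using LA by simp
  also have "\<dots> = Determinant.det L * Determinant.det A"
    by (rule det_mult[of _ "Suc n"]) (auto simp: L_def A_def)
  finally have dA: "Determinant.det A = Determinant.det B" using detL by simp
  have Bc: "B \<in> carrier_mat (Suc n) (Suc n)" by (simp add: B_def)
  have "Determinant.det B = (\<Sum>i<Suc n. B $$ (i,n) * cofactor B i n)"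
    by (rule laplace_expansion_column[OF Bc]) simp
  also have "\<dots> = B$$(0,n) * cofactor B 0 n + (\<Sum>i<n. B$$(Suc i,n) * cofactor B (Suc i) n)"
    by (rule sum.lessThan_Suc_shift)
  also have "\<dots> = cofactor B 0 n"
    by (simp add: B_def)
  also have "\<dots> = (-1)^n * Determinant.det (mat_delete B 0 n)"
    by (simp add: cofactor_def)
  also have "mat_delete B 0 n = Matrix.mat n n (\<lambda>(i,j). y j ^ i * (y j - y n))"
    by (rule eq_matI) (auto simp: mat_delete_def B_def)
  also have "Determinant.det \<dots> = (\<Prod>j<n. (y j - y n)) * (\<Prod>i<n. \<Prod>j\<in>{i<..<n}. (y j - y i))"
    using det_scale_cols[where f="\<lambda>i j. y j ^ i" and d="\<lambda>j. y j - y n" and n=n] Suc.IH by simp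
  finally have "Determinant.det A = (\<Prod>i<n. \<Prod>j\<in>{i<..<n}. (y j - y i)) * ((-1)^n * (\<Prod>j<n. (y j - y n)))"
    using dA by (simp add: ac_simps)
  also have "(-1)^n * (\<Prod>j<n. (y j - y n)) = (\<Prod>j<n. (y n - y j))"
  proof -
    have "(\<Prod>j<n. (y n - y j)) = (\<Prod>j<n. (-1) * (y j - y n))" by (intro prod.cong) auto
    also have "\<dots> = (-1)^n * (\<Prod>j<n. (y j - y n))" by (subst prod.distrib) simp
    finally show ?thesis by simp
  qed
  finally show ?case unfolding A_def prod_pairs_Suc .
qed

lemma det_monic_rows:
  fixes P :: "nat \<Rightarrow> 'a::comm_ring_1 poly"
  assumes deg: "\<And>i. degree (P i) \<le> i" and lc: "\<And>i. coeff (P i) i = 1"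
  shows "Determinant.det (Matrix.mat n n (\<lambda>(i,j). poly (P i) (y j)))
       = Determinant.det (Matrix.mat n n (\<lambda>(i,j). y j ^ i))"
proof -
  define C where "C = Matrix.mat n n (\<lambda>(i,l). coeff (P i) l)"
  define V where "V = Matrix.mat n n (\<lambda>(i,j). y j ^ i)"
  have CV: "C * V = Matrix.mat n n (\<lambda>(i,j). poly (P i) (y j))"
  proof (rule eq_matI)
    fix i j assume "i < dim_row (Matrix.mat n n (\<lambda>(i,j). poly (P i) (y j)))"
      "j < dim_col (Matrix.mat n n (\<lambda>(i,j). poly (P i) (y j)))"
    then have ij: "i < n" "j < n" by auto
    have "(C * V) $$ (i,j) = (\<Sum>l\<in>{0..<n}. coeff (P i) l * y j ^ l)"
      using ij by (simp add: C_def V_def scalar_prod_def)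
    also have "\<dots> = (\<Sum>l\<le>degree (P i). coeff (P i) l * y j ^ l)"
    proof (rule sum.mono_neutral_right)
      show "{..degree (P i)} \<subseteq> {0..<n}" using deg[of i] ij by auto
      show "\<forall>l\<in>{0..<n} - {..degree (P i)}. coeff (P i) l * y j ^ l = 0"
        by (auto simp: coeff_eq_0)
    qed auto
    also have "\<dots> = poly (P i) (y j)" by (simp add: poly_altdef)
    finally show "(C * V) $$ (i,j) = Matrix.mat n n (\<lambda>(i,j). poly (P i) (y j)) $$ (i,j)"
      using ij by simp
  qed (auto simp: C_def V_def)
  have detC: "Determinant.det C = 1"
  proof -
    have "Determinant.det C = prod_list (diag_mat C)"
    proof (rule det_lower_triangular[of n])
      fix i j assume "i < j" "j < n"
      then show "C $$ (i,j) = 0" using deg[of i] by (auto simp: C_def coeff_eq_0)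
    qed (simp add: C_def)
    also have "diag_mat C = map (\<lambda>_. 1) [0..<n]"
      by (simp add: diag_mat_def C_def lc)
    moreover have "prod_list (map (\<lambda>_. (1::'a)) xs) = 1" for xs :: "nat list" by (induct xs) auto
    ultimately show ?thesis by simp
  qed
  have "Determinant.det (C * V) = Determinant.det C * Determinant.det V"
    by (rule det_mult[of _ n]) (auto simp: C_def V_def)
  then show ?thesis using CV detC V_def by simp
qed

definition ffp :: "nat \<Rightarrow> real poly" where
  "ffp a = (\<Prod>l<a. [:- of_nat l, 1:])"

lemma ffp_deg_lc: "degree (ffp a) = a \<and> coeff (ffp a) a = 1"
proof (induction a)
  case 0
  then show ?case by (simp add: ffp_def)
next
  case (Suc a)
  have e: "ffp (Suc a) = ffp a * [:- of_nat a, 1:]" by (simp add: ffp_def)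
  have nz: "ffp a \<noteq> 0" using Suc by auto
  have d: "degree (ffp (Suc a)) = Suc a"
    unfolding e using nz Suc by (subst degree_mult_eq) auto
  have "coeff (ffp (Suc a)) (Suc a) = lead_coeff (ffp a) * lead_coeff [:- of_nat a, 1::real:]"
    using d unfolding e by (metis lead_coeff_mult)
  then show ?case using d Suc by simp
qed

lemma poly_ffp: "poly (ffp a) (of_nat y) = (if a \<le> y then fact y / fact (y - a) else 0)"
proof (induction a)
  case 0
  then show ?case by (simp add: ffp_def)
next
  case (Suc a)
  have e: "poly (ffp (Suc a)) (of_nat y) = poly (ffp a) (of_nat y) * (of_nat y - of_nat a)"
    by (simp add: ffp_def algebra_simps)
  show ?case
  proof (cases "Suc a \<le> y")
    case True
    then have "fact (y - a) = (of_nat (y - a) :: real) * fact (y - Suc a)"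
      by (metis Suc_diff_Suc Suc_le_lessD fact_Suc)
    moreover have "(of_nat (y - a) :: real) = of_nat y - of_nat a" using True by simp
    ultimately have f: "fact (y - a) = (of_nat y - of_nat a :: real) * fact (y - Suc a)" by simp
    have pos: "(of_nat y - of_nat a :: real) \<noteq> 0" using True by simp
    have "poly (ffp (Suc a)) (of_nat y) = fact y / fact (y - a) * (of_nat y - of_nat a)"
      using e Suc True by simp
    also have "\<dots> = fact y / fact (y - Suc a)" unfolding f using pos by (simp add: field_simps)
    finally show ?thesis using True by simp
  next
    case False
    then have "a = y \<or> a > y" by auto
    then show ?thesis using e Suc False by auto
  qed
qed

lemma prod_diff_nat: "(\<Prod>a<k. (real k - real a)) = fact k"
proof (induction k)
  case (Suc k)
  have "(\<Prod>a<Suc k. (real (Suc k) - real a)) = (real (Suc k) - real 0) * (\<Prod>a<k. (real (Suc k) - real (Suc a)))"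
    by (rule prod.lessThan_Suc_shift)
  then show ?case using Suc by simp
qed simp

lemma prod_pairs_fact: "(\<Prod>a<k. \<Prod>b\<in>{a<..<k}. (real b - real a)) = (\<Prod>b<k. fact b)"
proof (induction k)
  case (Suc k)
  then show ?case unfolding prod_pairs_Suc by (simp add: prod_diff_nat)
qed simp

lemma det_Am:
  "Determinant.det (Matrix.mat k k (\<lambda>(a,b). poly (ffp a) (of_nat (N + b)) / fact (N + b)))
   = (\<Prod>b<k. fact b / fact (N + b))"
proof -
  have "Determinant.det (Matrix.mat k k (\<lambda>(a,b). poly (ffp a) (of_nat (N + b)) / fact (N + b)))
      = Determinant.det (Matrix.mat k k (\<lambda>(a,b). poly (ffp a) (of_nat (N + b)) * (1 / fact (N + b))))"
    by simp
  also have "\<dots> = (\<Prod>b<k. 1 / fact (N + b)) * Determinant.det (Matrix.mat k k (\<lambda>(a,b). poly (ffp a) (of_nat (N + b))))"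
    by (rule det_scale_cols)
  also have "Determinant.det (Matrix.mat k k (\<lambda>(a,b). poly (ffp a) (of_nat (N + b))))
      = Determinant.det (Matrix.mat k k (\<lambda>(a,b). (of_nat (N + b) :: real) ^ a))"
    by (rule det_monic_rows) (use ffp_deg_lc in auto)
  also have "\<dots> = (\<Prod>a<k. \<Prod>b\<in>{a<..<k}. (real b - real a))"
    by (subst vandermonde) simp
  also have "\<dots> = (\<Prod>b<k. fact b)" by (rule prod_pairs_fact)
  finally show ?thesis by (simp add: prod.distrib[symmetric])
qed

definition cexp :: "nat \<Rightarrow> nat \<Rightarrow> nat" where
  "cexp k i = (if i < k then i else i - k)"

definition Gdet :: "nat \<Rightarrow> (nat \<Rightarrow> real) \<Rightarrow> (nat \<Rightarrow> nat) \<Rightarrow> real" where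
  "Gdet n x e = Determinant.det (Matrix.mat n n (\<lambda>(i,j). x j ^ e i))"

definition Cp :: "nat \<Rightarrow> nat \<Rightarrow> (nat \<Rightarrow> real) \<Rightarrow> (nat \<Rightarrow> nat) \<Rightarrow> real" where
  "Cp n k x p = (\<Prod>i=0..<n. x (p i) ^ cexp k i)"

definition eX :: "nat \<Rightarrow> nat multiset \<Rightarrow> nat \<Rightarrow> nat" where
  "eX k X i = cexp k i + count X i"

lemma Gdet_sum: "Gdet n x e = (\<Sum>p\<in>{p. p permutes {0..<n}}. signof p * (\<Prod>i=0..<n. x (p i) ^ e i))"
  unfolding Gdet_def det_def
  by (auto intro!: sum.cong prod.cong simp: permutes_def)

lemma Gdet_zero:
  assumes "\<not> inj_on e {0..<n}"
  shows "Gdet n x e = 0"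
proof -
  from assms obtain i i' where ii: "i < n" "i' < n" "i \<noteq> i'" "e i = e i'"
    unfolding inj_on_def by auto
  show ?thesis unfolding Gdet_def
    by (rule det_identical_rows[of _ n i i']) (use ii in \<open>auto intro!: eq_vecI\<close>)
qed

lemma det_Mmat_expand:
  assumes "k \<le> n"
  shows "Determinant.det (Mmat n k m t) = (\<Sum>p\<in>{p. p permutes {0..<n}}.
      signof p * Cp n k (\<lambda>j. m (Suc j)) p * (\<Prod>i<k. exp (- m (Suc (p i)) * t)))"
proof -
  have c: "Mmat n k m t \<in> carrier_mat n n" by (simp add: Mmat_def)
  show ?thesis unfolding det_def'[OF c]
  proof (intro sum.cong refl)
    fix p assume "p \<in> {p. p permutes {0..<n}}"
    then have pn: "\<And>i. i < n \<Longrightarrow> p i < n" by (auto simp: permutes_def)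
    have "(\<Prod>i=0..<n. Mmat n k m t $$ (i, p i))
        = (\<Prod>i=0..<n. m (Suc (p i)) ^ cexp k i * (if i < k then exp (- m (Suc (p i)) * t) else 1))"
      using pn by (intro prod.cong refl) (auto simp: cexp_def Mmat_def)
    also have "\<dots> = Cp n k (\<lambda>j. m (Suc j)) p * (\<Prod>i\<in>{i\<in>{0..<n}. i < k}. exp (- m (Suc (p i)) * t))"
      by (simp only: prod.distrib Cp_def prod.inter_filter[OF finite_atLeastLessThan])
    also have "{i\<in>{0..<n}. i < k} = {..<k}" using assms by auto
    finally show "signof p * (\<Prod>i=0..<n. Mmat n k m t $$ (i, p i)) =
        signof p * Cp n k (\<lambda>j. m (Suc j)) p * (\<Prod>i<k. exp (- m (Suc (p i)) * t))" by simp
  qed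
qed

lemma prod_neg_pow_fact:
  fixes a :: "nat \<Rightarrow> real"
  shows "(\<Prod>i<k. (- a i) ^ c i / fact (c i)) = (-1) ^ (\<Sum>i<k. c i) * (\<Prod>i<k. a i ^ c i) / (\<Prod>i<k. fact (c i))"
proof -
  have "(\<Prod>i<k. (- a i) ^ c i / fact (c i)) = (\<Prod>i<k. ((-1) ^ c i * a i ^ c i) / fact (c i))"
    by (intro prod.cong refl) (subst power_minus, rule refl)
  also have "\<dots> = (\<Prod>i<k. (-1) ^ c i) * (\<Prod>i<k. a i ^ c i) / (\<Prod>i<k. fact (c i))"
    by (simp only: prod_dividef prod.distrib)
  also have "(\<Prod>i<k. (-1::real) ^ c i) = (-1) ^ (\<Sum>i<k. c i)" by (rule power_sum[symmetric])
  finally show ?thesis .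
qed

lemma sum_count_size:
  fixes X :: "nat multiset"
  assumes "X \<in> multisets_of_size {..<k} j"
  shows "(\<Sum>i<k. count X i) = j"
proof -
  have sub: "set_mset X \<subseteq> {..<k}" and sz: "size X = j" using assms by (auto simp: multisets_of_size_def)
  have "size X = sum (count X) (set_mset X)" by (rule size_multiset_overloaded_eq)
  also have "\<dots> = (\<Sum>i<k. count X i)"
    by (rule sum.mono_neutral_left) (use sub in \<open>auto simp: not_in_iff\<close>)
  finally show ?thesis using sz by simp
qed

lemma F_nth:
  fixes x :: "nat \<Rightarrow> real"
  assumes kn: "k \<le> n"
  shows "fps_nth (\<Sum>p\<in>{p. p permutes {0..<n}}. fps_const (signof p * Cp n k x p) * (\<Prod>i<k. fps_exp (- x (p i)))) j
    = (\<Sum>X\<in>multisets_of_size {..<k} j. (-1)^j / (\<Prod>i<k. fact (count X i)) * Gdet n x (eX k X))"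
proof -
  let ?P = "{p. p permutes {0..<n}}"
  let ?M = "multisets_of_size {..<k} j"
  have "fps_nth (\<Sum>p\<in>?P. fps_const (signof p * Cp n k x p) * (\<Prod>i<k. fps_exp (- x (p i)))) j
      = (\<Sum>p\<in>?P. signof p * Cp n k x p * (\<Sum>X\<in>?M. \<Prod>i<k. (- x (p i)) ^ count X i / fact (count X i)))"
    unfolding fps_sum_nth fps_mult_left_const_nth fps_prod_nth'[OF finite_lessThan] fps_exp_nth by simp
  also have "\<dots> = (\<Sum>p\<in>?P. \<Sum>X\<in>?M. signof p * Cp n k x p * (\<Prod>i<k. (- x (p i)) ^ count X i / fact (count X i)))"
    by (simp add: sum_distrib_left)
  also have "\<dots> = (\<Sum>X\<in>?M. \<Sum>p\<in>?P. signof p * Cp n k x p * (\<Prod>i<k. (- x (p i)) ^ count X i / fact (count X i)))"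
    by (rule sum.swap)
  also have "\<dots> = (\<Sum>X\<in>?M. \<Sum>p\<in>?P. (-1)^j / (\<Prod>i<k. fact (count X i)) * (signof p * (\<Prod>i=0..<n. x (p i) ^ eX k X i)))"
  proof (intro sum.cong refl)
    fix X p assume X: "X \<in> ?M" and p: "p \<in> ?P"
    have sub: "set_mset X \<subseteq> {..<k}" using X by (auto simp: multisets_of_size_def)
    have "(\<Prod>i=0..<n. x (p i) ^ eX k X i) = Cp n k x p * (\<Prod>i=0..<n. x (p i) ^ count X i)"
      by (simp add: eX_def Cp_def power_add prod.distrib)
    also have "(\<Prod>i=0..<n. x (p i) ^ count X i) = (\<Prod>i<k. x (p i) ^ count X i)"
    proof (rule prod.mono_neutral_right)
      have "count X i = 0" if "i \<notin> {..<k}" for i using sub that by (auto simp: not_in_iff[symmetric])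
      then show "\<forall>i\<in>{0..<n} - {..<k}. x (p i) ^ count X i = 1" by auto
    qed (use kn in auto)
    finally have e1: "(\<Prod>i=0..<n. x (p i) ^ eX k X i) = Cp n k x p * (\<Prod>i<k. x (p i) ^ count X i)" .
    show "signof p * Cp n k x p * (\<Prod>i<k. (- x (p i)) ^ count X i / fact (count X i)) =
        (-1)^j / (\<Prod>i<k. fact (count X i)) * (signof p * (\<Prod>i=0..<n. x (p i) ^ eX k X i))"
      unfolding e1 prod_neg_pow_fact[where a="\<lambda>i. x (p i)"] sum_count_size[OF X]
      by (simp add: field_simps)
  qed
  also have "\<dots> = (\<Sum>X\<in>?M. (-1)^j / (\<Prod>i<k. fact (count X i)) * Gdet n x (eX k X))"
    by (simp add: Gdet_sum sum_distrib_left)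
  finally show ?thesis .
qed

lemma sum_distinct_lower:
  fixes T :: "nat set"
  assumes "finite T" "card T = k" "\<forall>t\<in>T. N \<le> t"
  shows "(\<Sum>i<k. N + i) \<le> \<Sum>T \<and> (\<Sum>T = (\<Sum>i<k. N + i) \<longrightarrow> T = {N..<N+k})"
  using assms
proof (induction k arbitrary: T)
  case 0
  then show ?case by simp
next
  case (Suc k)
  then have ne: "T \<noteq> {}" by auto
  define M where "M = Max T"
  have MT: "M \<in> T" using Suc ne by (simp add: M_def)
  have Mmax: "\<forall>t\<in>T. t \<le> M" using Suc by (simp add: M_def)
  define T' where "T' = T - {M}"
  have fT': "finite T'" "card T' = k" "\<forall>t\<in>T'. N \<le> t" using Suc MT by (auto simp: T'_def)
  note IH = Suc.IH[OF fT']
  have sub: "T \<subseteq> {N..M}" using Suc Mmax by auto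
  have "Suc k \<le> card {N..M}" using card_mono[OF _ sub] Suc by simp
  then have MB: "N + k \<le> M" by simp
  have sT: "\<Sum>T = M + \<Sum>T'" using Suc MT by (simp add: T'_def sum.remove)
  have sk: "(\<Sum>i<Suc k. N + i) = (\<Sum>i<k. N + i) + (N + k)" by simp
  show ?case
  proof
    show "(\<Sum>i<Suc k. N + i) \<le> \<Sum>T" using IH MB sT sk by linarith
    show "\<Sum>T = (\<Sum>i<Suc k. N + i) \<longrightarrow> T = {N..<N + Suc k}"
    proof
      assume eq: "\<Sum>T = (\<Sum>i<Suc k. N + i)"
      then have M: "M = N + k" and "\<Sum>T' = (\<Sum>i<k. N + i)" using IH MB sT sk by linarith+
      then have "T' = {N..<N+k}" using IH by simp
      then have "T = insert M {N..<N+k}" using MT T'_def by auto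
      then show "T = {N..<N + Suc k}" using M by auto
    qed
  qed
qed

lemma eX_lt: "i < k \<Longrightarrow> eX k X i = i + count X i"
  by (simp add: eX_def cexp_def)

lemma good_bound:
  fixes X :: "nat multiset"
  assumes kn: "k \<le> n" and X: "X \<in> multisets_of_size {..<k} j" and inj: "inj_on (eX k X) {0..<n}"
  shows "\<forall>i<k. n - k \<le> eX k X i" and "k * (n - k) \<le> j"
    and "j = k * (n - k) \<Longrightarrow> eX k X ` {..<k} = {n - k..<n}"
proof -
  have sub: "set_mset X \<subseteq> {..<k}" using X by (auto simp: multisets_of_size_def)
  have c0: "count X i = 0" if "k \<le> i" for i using sub that by (auto simp: not_in_iff[symmetric])
  show ge: "\<forall>i<k. n - k \<le> eX k X i"
  proof (intro allI impI)
    fix i assume i: "i < k"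
    show "n - k \<le> eX k X i"
    proof (rule ccontr)
      assume "\<not> n - k \<le> eX k X i"
      then have lt: "eX k X i < n - k" by simp
      define i' where "i' = k + eX k X i"
      have i'n: "i' < n" using lt kn by (simp add: i'_def)
      have "eX k X i' = eX k X i" using c0[of i'] by (simp add: eX_def cexp_def i'_def)
      then have "i' = i" using inj i'n i kn by (auto dest: inj_onD)
      then show False using i by (simp add: i'_def)
    qed
  qed
  define T where "T = eX k X ` {..<k}"
  have "{..<k} \<subseteq> {0..<n}" using kn by auto
  then have injk: "inj_on (eX k X) {..<k}" using inj_on_subset[OF inj] by blast
  have cT: "card T = k" using injk by (simp add: T_def card_image)
  have sT: "\<Sum>T = (\<Sum>i<k. i) + j"
  proof -
    have "\<Sum>T = (\<Sum>i<k. eX k X i)" unfolding T_def using injk by (simp add: sum.reindex)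
    also have "\<dots> = (\<Sum>i<k. i + count X i)" by (intro sum.cong refl) (simp add: eX_lt)
    also have "\<dots> = (\<Sum>i<k. i) + j" using sum_count_size[OF X] by (simp add: sum.distrib)
    finally show ?thesis .
  qed
  have geT: "\<forall>t\<in>T. n - k \<le> t" using ge by (auto simp: T_def)
  have L: "(\<Sum>i<k. (n-k) + i) \<le> \<Sum>T \<and> (\<Sum>T = (\<Sum>i<k. (n-k) + i) \<longrightarrow> T = {n-k..<(n-k)+k})"
    by (rule sum_distinct_lower) (use cT geT in \<open>auto simp: T_def\<close>)
  have sN: "(\<Sum>i<k. (n-k) + i) = k * (n - k) + (\<Sum>i<k. i)" by (simp add: sum.distrib)
  show "k * (n - k) \<le> j" using L sT sN by linarith
  show "j = k * (n - k) \<Longrightarrow> eX k X ` {..<k} = {n - k..<n}"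
  proof -
    assume "j = k * (n - k)"
    then have "T = {n-k..<(n-k)+k}" using L sT sN by auto
    then show ?thesis using kn by (simp add: T_def)
  qed
qed

lemma Gdet_rot_perm:
  fixes x :: "nat \<Rightarrow> real"
  assumes q: "q permutes {0..<k}"
  shows "Gdet (k + N) x (\<lambda>i. if i < k then N + q i else i - k)
       = signof q * (-1) ^ (k * N) * Determinant.det (Matrix.mat (k+N) (k+N) (\<lambda>(i,j). x j ^ i))"
proof -
  define Vm where "Vm = Matrix.mat (k+N) (k+N) (\<lambda>(i,j). x j ^ i)"
  define W where "W = Matrix.mat (k+N) (k+N) (\<lambda>(i,j). x j ^ (if i < k then i + N else i - k))"
  have Vc: "Vm \<in> carrier_mat (k+N) (k+N)" by (simp add: Vm_def)
  have Wc: "W \<in> carrier_mat (k+N) (k+N)" by (simp add: W_def)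
  have qn: "q permutes {0..<k+N}" using permutes_subset[OF q] by auto
  have qlt: "\<And>i. i < k \<Longrightarrow> q i < k" using q by (simp add: permutes_in_image)
  have qid: "\<And>i. k \<le> i \<Longrightarrow> q i = i" using q by (simp add: permutes_not_in)
  have "Determinant.det Vm = (-1)^(k * N) * Determinant.det (Matrix.mat (k + N) (k + N) (\<lambda> (i,j).
    Vm $$ ((if i < k then i + N else i - k),j)))"
    by (rule det_swap_rows[OF Vc])
  also have "Matrix.mat (k + N) (k + N) (\<lambda> (i,j). Vm $$ ((if i < k then i + N else i - k),j)) = W"
    by (rule eq_matI) (auto simp: Vm_def W_def)
  finally have dV: "Determinant.det Vm = (-1)^(k * N) * Determinant.det W" .
  have "Gdet (k + N) x (\<lambda>i. if i < k then N + q i else i - k)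
      = Determinant.det (Matrix.mat (k+N) (k+N) (\<lambda>(i,j). W $$ (q i, j)))"
    unfolding Gdet_def
  proof (rule arg_cong[where f=Determinant.det], rule eq_matI)
    fix i j assume "i < dim_row (Matrix.mat (k+N) (k+N) (\<lambda>(i,j). W $$ (q i, j)))"
      "j < dim_col (Matrix.mat (k+N) (k+N) (\<lambda>(i,j). W $$ (q i, j)))"
    then have ij: "i < k + N" "j < k + N" by auto
    show "Matrix.mat (k + N) (k + N) (\<lambda>(i, j). x j ^ (if i < k then N + q i else i - k)) $$ (i, j) =
         Matrix.mat (k + N) (k + N) (\<lambda>(i, j). W $$ (q i, j)) $$ (i, j)"
    proof (cases "i < k")
      case True
      then show ?thesis using ij qlt[OF True] by (simp add: W_def add.commute)
    next
      case False
      then show ?thesis using ij qid[of i] by (simp add: W_def)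
    qed
  qed auto
  also have "\<dots> = signof q * Determinant.det W" by (rule det_permute_rows[OF Wc qn])
  finally have "Gdet (k + N) x (\<lambda>i. if i < k then N + q i else i - k) = signof q * Determinant.det W" .
  moreover have "Determinant.det W = (-1)^(k*N) * Determinant.det Vm"
    using dV by (simp add: power_mult_distrib[symmetric])
  ultimately show ?thesis by (simp add: Vm_def)
qed

lemma lead_sum:
  fixes x :: "nat \<Rightarrow> real"
  shows "(\<Sum>X\<in>multisets_of_size {..<k} (k*N). (-1)^(k*N) / (\<Prod>i<k. fact (count X i)) * Gdet (k+N) x (eX k X))
     = Determinant.det (Matrix.mat (k+N) (k+N) (\<lambda>(i,j). x j ^ i)) * (\<Prod>b<k. fact b / fact (N + b))"
proof -
  define DV where "DV = Determinant.det (Matrix.mat (k+N) (k+N) (\<lambda>(i,j). x j ^ i))"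
  define Am where "Am = Matrix.mat k k (\<lambda>(a,b). poly (ffp a) (of_nat (N + b)) / fact (N + b))"
  define MS where "MS = multisets_of_size {..<k} (k*N)"
  define GM where "GM = {X\<in>MS. inj_on (eX k X) {0..<k+N}}"
  define PP where "PP = {q. q permutes {0..<k}}"
  define GP where "GP = {q\<in>PP. \<forall>i<k. i \<le> N + q i}"
  define g where "g X = (-1)^(k*N) / (\<Prod>i<k. fact (count X i)) * Gdet (k+N) x (eX k X)" for X
  define h where "h q = DV * (signof q * (\<Prod>i=0..<k. Am $$ (i, q i)))" for q
  define Xq where "Xq q = (\<Sum>i\<in>{..<k}. replicate_mset (N + q i - i) i)" for q :: "nat \<Rightarrow> nat"
  define qX where "qX X = (\<lambda>i. if i < k then i + count X i - N else i)" for X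
  have cXq: "count (Xq q) a = (if a < k then N + q a - a else 0)" for q a
    by (simp add: Xq_def count_sum)
  have fMS: "finite MS" unfolding MS_def by auto
  have MSsub: "set_mset X \<subseteq> {..<k}" if "X \<in> MS" for X using that by (auto simp: MS_def multisets_of_size_def)
  have c0: "count X a = 0" if "X \<in> MS" "k \<le> a" for X a
    using MSsub[OF that(1)] that(2) by (auto simp: not_in_iff[symmetric])
  have s1: "sum g MS = sum g GM"
  proof (rule sum.mono_neutral_right[OF fMS])
    show "GM \<subseteq> MS" by (auto simp: GM_def)
    show "\<forall>X\<in>MS - GM. g X = 0" by (auto simp: GM_def g_def Gdet_zero)
  qed
  have s2: "sum h GP = sum g GM"
  proof (rule sum.reindex_bij_witness[where i=qX and j=Xq])
    fix q assume "q \<in> GP"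
    then have q: "q permutes {0..<k}" and qc: "\<forall>i<k. i \<le> N + q i" by (auto simp: GP_def PP_def)
    have qlt: "\<And>i. i < k \<Longrightarrow> q i < k" using q by (simp add: permutes_in_image)
    have qid: "\<And>i. k \<le> i \<Longrightarrow> q i = i" using q by (simp add: permutes_not_in)
    have eXq: "eX k (Xq q) = (\<lambda>i. if i < k then N + q i else i - k)"
      using qc by (auto simp: eX_def cexp_def cXq)
    show "qX (Xq q) = q"
      using qc qid by (auto simp: qX_def cXq)
    show "Xq q \<in> GM"
    proof -
      have "set_mset (Xq q) \<subseteq> {..<k}"
        by (auto simp: cXq simp flip: count_greater_zero_iff split: if_splits)
      moreover have "size (Xq q) = k * N"
      proof -
        have "size (Xq q) = (\<Sum>i<k. N + q i - i)" by (simp add: Xq_def)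
        moreover have "(\<Sum>i<k. N + q i - i) + (\<Sum>i<k. i) = (\<Sum>i<k. N + q i)"
          using qc by (simp add: sum.distrib[symmetric])
        moreover have "(\<Sum>i<k. q i) = (\<Sum>i<k. i)"
          using sum.permute[OF q, of id] by (simp add: atLeast0LessThan)
        moreover have "(\<Sum>i<k. N + q i) = k * N + (\<Sum>i<k. q i)" by (simp add: sum.distrib)
        ultimately show ?thesis by linarith
      qed
      moreover have "inj_on (eX k (Xq q)) {0..<k+N}"
      proof (rule inj_onI)
        fix a b assume ab: "a \<in> {0..<k+N}" "b \<in> {0..<k+N}" "eX k (Xq q) a = eX k (Xq q) b"
        have iq: "q a = q b \<Longrightarrow> a = b" using permutes_inj[OF q] by (auto dest: injD)
        show "a = b" using ab iq unfolding eXq by (auto split: if_splits)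
      qed
      ultimately show ?thesis by (simp add: GM_def MS_def multisets_of_size_def)
    qed
    show "g (Xq q) = h q"
    proof -
      have G: "Gdet (k+N) x (eX k (Xq q)) = signof q * (-1) ^ (k * N) * DV"
        unfolding eXq DV_def by (rule Gdet_rot_perm[OF q])
      have "(\<Prod>i=0..<k. Am $$ (i, q i)) = (\<Prod>i<k. 1 / fact (N + q i - i))"
        unfolding atLeast0LessThan
      proof (intro prod.cong refl)
        fix i assume i: "i \<in> {..<k}"
        have "Am $$ (i, q i) = poly (ffp i) (of_nat (N + q i)) / fact (N + q i)"
          using i qlt[of i] by (simp add: Am_def)
        also have "\<dots> = 1 / fact (N + q i - i)" using qc i poly_ffp[of i "N + q i"] by simp
        finally show "Am $$ (i, q i) = 1 / fact (N + q i - i)" .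
      qed
      moreover have "(\<Prod>i<k. fact (count (Xq q) i)) = (\<Prod>i<k. fact (N + q i - i) :: real)"
        by (simp add: cXq)
      ultimately show ?thesis
        unfolding g_def h_def G by (simp add: prod_dividef power_mult_distrib[symmetric] field_simps)
    qed
  next
    fix X assume "X \<in> GM"
    then have X: "X \<in> MS" and inj: "inj_on (eX k X) {0..<k+N}" by (auto simp: GM_def)
    have XM: "X \<in> multisets_of_size {..<k} (k * (k + N - k))" using X by (simp add: MS_def)
    have ge: "\<forall>i<k. N \<le> eX k X i" using good_bound(1)[OF _ XM inj] by simp
    have im: "eX k X ` {..<k} = {N..<k+N}" using good_bound(3)[OF _ XM inj] by simp
    have ge': "N \<le> i + count X i" if "i < k" for i using ge that by (simp add: eX_lt)
    show "Xq (qX X) = X"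
    proof (rule multiset_eqI)
      fix a show "count (Xq (qX X)) a = count X a"
        using ge'[of a] c0[OF X, of a] by (auto simp: cXq qX_def)
    qed
    show "qX X \<in> GP"
    proof -
      have "qX X ` {0..<k} = {0..<k}"
      proof -
        have "qX X ` {0..<k} = (\<lambda>v. v - N) ` (eX k X ` {..<k})"
          by (auto simp: qX_def eX_lt image_iff atLeast0LessThan)
        also have "\<dots> = {0..<k}" unfolding im
          by (auto simp: image_iff intro!: bexI[where x="_ + N"])
        finally show ?thesis .
      qed
      moreover have "inj_on (qX X) {0..<k}"
      proof (rule inj_onI)
        fix a b assume ab: "a \<in> {0..<k}" "b \<in> {0..<k}" "qX X a = qX X b"
        then have "eX k X a = eX k X b" using ge'[of a] ge'[of b] by (simp add: qX_def eX_lt)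
        then show "a = b" using inj ab by (auto dest: inj_onD)
      qed
      ultimately have "bij_betw (qX X) {0..<k} {0..<k}" by (simp add: bij_betw_def)
      then have "qX X permutes {0..<k}" by (rule bij_imp_permutes) (simp add: qX_def)
      moreover have "\<forall>i<k. i \<le> N + qX X i" by (auto simp: qX_def)
      ultimately show ?thesis by (simp add: GP_def PP_def)
    qed
  qed
  have s3: "sum h GP = sum h PP"
  proof (rule sum.mono_neutral_left)
    show "finite PP" by (simp add: PP_def finite_permutations)
    show "GP \<subseteq> PP" by (auto simp: GP_def)
    show "\<forall>q\<in>PP - GP. h q = 0"
    proof
      fix q assume "q \<in> PP - GP"
      then have q: "q permutes {0..<k}" and "\<exists>i<k. N + q i < i" by (auto simp: GP_def PP_def)
      then obtain i where i: "i < k" "N + q i < i" by auto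
      have "q i < k" using q i by (simp add: permutes_in_image)
      then have "Am $$ (i, q i) = 0" using i poly_ffp[of i "N + q i"] by (simp add: Am_def)
      then have "(\<Prod>i=0..<k. Am $$ (i, q i)) = 0" using i by (intro prod_zero) auto
      then show "h q = 0" by (simp add: h_def)
    qed
  qed
  have s4: "sum h PP = DV * Determinant.det Am"
    by (simp add: h_def PP_def det_def Am_def sum_distrib_left)
  have "sum g MS = DV * (\<Prod>b<k. fact b / fact (N + b))"
    using s1 s2 s3 s4 det_Am[of k N] by (simp add: Am_def)
  then show ?thesis by (simp add: g_def MS_def DV_def)
qed

lemma Vand_reindex: "Vand n m = (\<Prod>i<n. \<Prod>j\<in>{i<..<n}. (m (Suc i) - m (Suc j)))"
proof -
  have "Vand n m = (\<Prod>i\<in>Suc ` {..<n}. \<Prod>j\<in>{i<..n}. (m i - m j))"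
    by (simp add: Vand_def image_Suc_lessThan)
  also have "\<dots> = (\<Prod>i<n. \<Prod>j\<in>{Suc i<..n}. (m (Suc i) - m j))"
    by (simp add: prod.reindex)
  also have "\<dots> = (\<Prod>i<n. \<Prod>j\<in>{i<..<n}. (m (Suc i) - m (Suc j)))"
  proof (rule prod.cong[OF refl])
    fix i
    have e1: "{i<..<n} = {Suc i..<n}" by auto
    have e: "{Suc i<..n} = Suc ` {i<..<n}" unfolding e1 by auto
    show "(\<Prod>j\<in>{Suc i<..n}. (m (Suc i) - m j)) = (\<Prod>j\<in>{i<..<n}. (m (Suc i) - m (Suc j)))"
      unfolding e by (subst prod.reindex) auto
  qed
  finally show ?thesis .
qed

lemma sign_flip:
  fixes y :: "nat \<Rightarrow> real"
  shows "(\<Prod>i<n. \<Prod>j\<in>{i<..<n}. (y i - y j)) = (-1)^(\<Sum>i<n. i) * (\<Prod>i<n. \<Prod>j\<in>{i<..<n}. (y j - y i))"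
proof (induction n)
  case 0
  then show ?case by simp
next
  case (Suc n)
  have "(\<Prod>i<n. (y i - y n)) = (\<Prod>i<n. (-1) * (y n - y i))" by (intro prod.cong) auto
  also have "\<dots> = (-1)^n * (\<Prod>i<n. (y n - y i))" by (subst prod.distrib) simp
  finally have e: "(\<Prod>i<n. (y i - y n)) = (-1)^n * (\<Prod>i<n. (y n - y i))" .
  show ?case unfolding prod_pairs_Suc Suc e by (simp add: power_add)
qed

lemma parity_sum0: "even (\<Sum>i<a. i) \<longleftrightarrow> (a mod 4 = 0 \<or> a mod 4 = (1::nat))"
proof (induction a)
  case 0
  then show ?case by simp
next
  case (Suc a)
  have e: "(\<Sum>i<Suc a. i) = (\<Sum>i<a. i) + a" by simp
  have "\<forall>S::nat. (even S \<longleftrightarrow> (a mod 4 = 0 \<or> a mod 4 = 1)) \<longrightarrow> (even (S + a) \<longleftrightarrow> (Suc a mod 4 = 0 \<or> Suc a mod 4 = 1))"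
    by presburger
  then show ?case using Suc e by metis
qed

lemma parity_sum: "even (\<Sum>i<a. i) \<longleftrightarrow> a mod 4 \<in> {0, 1::nat}"
  using parity_sum0[of a] by auto

lemma sigma_sign: "(-1::real)^(\<Sum>i<a. i) = (-1)^(sigma (int a))"
proof -
  have z: "int a mod 4 = int (a mod 4)" by (simp add: zmod_int)
  show ?thesis
  proof (cases "a mod 4 = 0 \<or> a mod 4 = 1")
    case True
    then have "int a mod 4 \<in> {0, 1}" using z by auto
    then have s: "sigma (int a) = 0" by (simp add: sigma_def)
    have "even (\<Sum>i<a. i)" using parity_sum0[of a] True by simp
    then show ?thesis using s by simp
  next
    case False
    then have "int a mod 4 \<notin> {0, 1}" using z by auto
    then have s: "sigma (int a) = 1" by (simp add: sigma_def)
    have "odd (\<Sum>i<a. i)" using parity_sum0[of a] False by simp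
    then show ?thesis using s by simp
  qed
qed

lemma sum_split_sign: "(-1::real)^(\<Sum>i<k+N. i) = (-1)^(\<Sum>i<k. i) * (-1)^(k*N) * (-1)^(\<Sum>i<N. i)"
proof (induction N)
  case 0
  then show ?case by simp
next
  case (Suc N)
  have a: "(\<Sum>i<k + Suc N. i) = (\<Sum>i<k+N. i) + (k + N)" by simp
  have b: "(\<Sum>i<Suc N. i) = (\<Sum>i<N. i) + N" by simp
  show ?case unfolding a b using Suc by (simp add: power_add)
qed

theorem mainTheorem7:
  fixes n k :: nat and m :: "nat \<Rightarrow> real"
  assumes "n \<ge> 2" and "0 < k" and "k \<le> n div 2"
  shows "\<exists>F. (\<lambda>t. Determinant.det (Mmat n k m t)) has_fps_expansion F
           \<and> (\<forall>j < k * (n - k). fps_nth F j = 0)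
           \<and> fps_nth F (k * (n - k))
               = eps_kn k n * Vand n m / fact (k * (n - k)) * c0 k n"
proof -
  have kn: "k \<le> n" using assms(3) by linarith
  define N where "N = n - k"
  have nN: "n = k + N" using kn by (simp add: N_def)
  define x where "x = (\<lambda>j. m (Suc j))"
  define F where "F = (\<Sum>p\<in>{p. p permutes {0..<n}}. fps_const (signof p * Cp n k x p) * (\<Prod>i<k. fps_exp (- x (p i))))"
  have exp: "(\<lambda>t. Determinant.det (Mmat n k m t)) has_fps_expansion F"
  proof -
    have "(\<lambda>t. \<Sum>p\<in>{p. p permutes {0..<n}}. signof p * Cp n k x p * (\<Prod>i<k. exp (- x (p i) * t)))
        has_fps_expansion F"
      unfolding F_def
      by (intro has_fps_expansion_sum has_fps_expansion_cmult_left has_fps_expansion_prod has_fps_expansion_exp)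
    moreover have "(\<lambda>t. Determinant.det (Mmat n k m t)) =
        (\<lambda>t. \<Sum>p\<in>{p. p permutes {0..<n}}. signof p * Cp n k x p * (\<Prod>i<k. exp (- x (p i) * t)))"
      using det_Mmat_expand[OF kn] by (simp add: x_def)
    ultimately show ?thesis by simp
  qed
  have low: "\<forall>j < k * (n - k). fps_nth F j = 0"
  proof (intro allI impI)
    fix j assume j: "j < k * (n - k)"
    have "fps_nth F j = (\<Sum>X\<in>multisets_of_size {..<k} j. (-1)^j / (\<Prod>i<k. fact (count X i)) * Gdet n x (eX k X))"
      unfolding F_def by (rule F_nth[OF kn])
    also have "\<dots> = 0"
    proof (intro sum.neutral ballI)
      fix X assume X: "X \<in> multisets_of_size {..<k} j"
      have "\<not> inj_on (eX k X) {0..<n}"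
        using good_bound(2)[OF kn X] j by auto
      then show "(-1)^j / (\<Prod>i<k. fact (count X i)) * Gdet n x (eX k X) = 0"
        by (simp add: Gdet_zero)
    qed
    finally show "fps_nth F j = 0" .
  qed
  define DV where "DV = Determinant.det (Matrix.mat n n (\<lambda>(i,j). x j ^ i))"
  have lead: "fps_nth F (k * (n - k)) = DV * (\<Prod>b<k. fact b / fact (N + b))"
  proof -
    have "fps_nth F (k * N) = (\<Sum>X\<in>multisets_of_size {..<k} (k*N). (-1)^(k*N) / (\<Prod>i<k. fact (count X i)) * Gdet n x (eX k X))"
      unfolding F_def by (rule F_nth[OF kn])
    also have "\<dots> = DV * (\<Prod>b<k. fact b / fact (N + b))"
      unfolding DV_def nN by (rule lead_sum)
    finally show ?thesis by (simp add: N_def)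
  qed
  have DVv: "DV = (\<Prod>i<n. \<Prod>j\<in>{i<..<n}. (x j - x i))"
    unfolding DV_def by (rule vandermonde)
  have V: "Vand n m = (-1)^(\<Sum>i<n. i) * DV"
    unfolding Vand_reindex DVv using sign_flip[of x n] by (simp add: x_def)
  have eps: "eps_kn k n = (-1)^(\<Sum>i<n. i)"
    unfolding eps_kn_def nN sum_split_sign by (simp add: power_add sigma_sign)
  have epsV: "eps_kn k n * Vand n m = DV"
    unfolding V eps by (simp add: power_mult_distrib[symmetric])
  have pr: "(\<Prod>i\<in>{1..k}. fact (i - 1) / fact (n - k + i - 1)) = (\<Prod>b<k. fact b / fact (N + b) :: real)"
  proof -
    have "(\<Prod>i\<in>{1..k}. fact (i - 1) / fact (n - k + i - 1)) = (\<Prod>i\<in>Suc ` {..<k}. fact (i - 1) / fact (n - k + i - 1) :: real)"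
      by (simp add: image_Suc_lessThan)
    also have "\<dots> = (\<Prod>b<k. fact b / fact (N + b))"
      by (simp add: prod.reindex N_def)
    finally show ?thesis .
  qed
  have "eps_kn k n * Vand n m / fact (k * (n - k)) * c0 k n = DV * (\<Prod>b<k. fact b / fact (N + b))"
    unfolding c0_def pr epsV by simp
  then show ?thesis using exp low lead by auto
qed

end
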